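(* For all contexts $\Gamma,\Delta$, terms $M,A$ and substitution $\sigma$: if $\sigma:\Gamma\rightharpoonup\Delta$, $\Delta\ \mathrm{ok}$ and $\Gamma\vdash M:A$, then $\Delta\vdash M\bullet\sigma:A\bullet\sigma$.
   Context: Let $\mathcal V$ (the variables) be a type with decidable equality, equipped with functions $\mathrm{encode}:\mathcal V\to\mathbb N$ and $\mathrm{decode}:\mathbb N\to\mathcal V$ such that $\mathrm{encode}(\mathrm{decode}\,n)=n$ for all $n$. Let $\mathcal C$ (the constants) be any type. Terms $\Lambda$ are generated by: $c\,k$ ($k\in\mathcal C$), $v\,x$ ($x\in\mathcal V$), $\lambda[x:A]M$, $\Pi[x:A]B$ and $M\cdot N$; in $\lambda[x:A]M$ and $\Pi[x:A]B$ the name $x$ binds in $M$ (resp. $B$) but not in $A$. Terms are raw first-order syntax (not identified up to renaming of bound variables) and $\equiv$ denotes syntactic identity. The list of free variables is $\mathrm{fv}(c\,k)=[\,]$, $\mathrm{fv}(v\,x)=[x]$, $\mathrm{fv}(\lambda[x:A]M)=\mathrm{fv}\,A\mathbin{+\!\!+}(\mathrm{fv}\,M-x)$, $\mathrm{fv}(\Pi[x:A]B)=\mathrm{fv}\,A\mathbin{+\!\!+}(\mathrm{fv}\,B-x)$, $\mathrm{fv}(M\cdot N)=\mathrm{fv}\,M\mathbin{+\!\!+}\mathrm{fv}\,N$, where $\mathbin{+\!\!+}$ is list concatenation and $xs-x$ deletes every occurrence of $x$ from $xs$. Fix a function $\chi':\mathrm{List}\,\mathbb N\to\mathbb N$ with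 $\chi'(ns)\notin ns$ for every list $ns$, and put $X'(xs)=\mathrm{decode}(\chi'(\mathrm{map}\ \mathrm{encode}\ xs))$. A substitution is any function $\sigma:\mathcal V\to\Lambda$; $\iota=v$ is the identity substitution; $(\sigma,x:=N)(y)=N$ if $y=x$ and $\sigma\,y$ otherwise. For a substitution $\sigma$ and a list $xs$ of variables, $X(\sigma,xs)=X'(\text{concatenation of the lists }\mathrm{fv}(\sigma\,y)\text{ for }y\in xs)$. The action $M\bullet\sigma$ is defined by structural recursion: $c\,k\bullet\sigma=c\,k$; $v\,x\bullet\sigma=\sigma\,x$; $(M\cdot N)\bullet\sigma=(M\bullet\sigma)\cdot(N\bullet\sigma)$; $(\lambda[x:A]M)\bullet\sigma=\lambda[y:A\bullet\sigma](M\bullet(\sigma,x:=v\,y))$ with $y=X(\sigma,\mathrm{fv}\,M-x)$; $(\Pi[x:A]B)\bullet\sigma=\Pi[y:A\bullet\sigma](B\bullet(\sigma,x:=v\,y))$ with $y=X(\sigma,\mathrm{fv}\,B-x)$. Unary substitution is $M[x:=N]=M\bullet(\iota,x:=N)$. $\alpha$-conversion $\sim_\alpha$ is the inductively defined relation with rules: $c\,k\sim_\alpha c\,k$; $v\,x\sim_\alpha v\,x$; $M\cdot N\sim_\alpha M'\cdot N'$ if $M\sim_\alpha M'$ and $N\sim_\alpha N'$; $\lambda[x:A]M\sim_\alpha\lambda[x':A']M'$ if $A\sim_\alpha A'$ and there is a variable $y$ with $y\notin\mathrm{fv}\,M-x$, $y\notin\mathrm{fv}\,M'-x'$ and $M[x:=v\,y]\equiv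 M'[x':=v\,y]$; and the same rule with $\Pi$ in place of $\lambda$. $\beta$-contraction is $(\lambda[x:A]M)\cdot N\ \triangleright_\beta\ M[x:=N]$. One-step $\beta$-reduction $\to_\beta$ is its contextual closure, inductively: $M\to_\beta N$ if $M\triangleright_\beta N$; $\lambda[x:A]M\to_\beta\lambda[x:A]M'$ and $\Pi[x:A]M\to_\beta\Pi[x:A]M'$ if $M\to_\beta M'$; $\lambda[x:A]M\to_\beta\lambda[x:A']M$ and $\Pi[x:A]M\to_\beta\Pi[x:A']M$ if $A\to_\beta A'$; $M\cdot P\to_\beta N\cdot P$ and $P\cdot M\to_\beta P\cdot N$ if $M\to_\beta N$. $\beta$-conversion $\simeq_\beta$ is the equivalence (reflexive–symmetric–transitive) closure of $\sim_\alpha\cup\to_\beta$. Pure Type System: fix a binary relation $\mathcal A\subseteq\mathcal C\times\mathcal C$ (axioms) and a ternary relation $\mathcal R\subseteq\mathcal C\times\mathcal C\times\mathcal C$ (rules). A context is a finite list of pairs $(x,A)$ with $x\in\mathcal V$, $A\in\Lambda$; $\Gamma,x:A$ denotes the list $(x,A)::\Gamma$; $\mathrm{dom}\,\Gamma$ is the list of first components; $(x,A)\in\Gamma$ is list membership. The judgments $\Gamma\ \mathrm{ok}$ and $\Gamma\vdash M:A$ are defined mutually inductively by: (nil) $[\,]\ \mathrm{ok}$; (cons) if $\Gamma\ \mathrm{ok}$, $\Gamma\vdash A:c\,s$ and $x\notin\mathrm{dom}\,\Gamma$ then $\Gamma,x:A\ \mathrm{ok}$; (sort) if $\Gamma\ \mathrm{ok}$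 and $\mathcal A\,s_1\,s_2$ then $\Gamma\vdash c\,s_1:c\,s_2$; (var) if $\Gamma\ \mathrm{ok}$ and $(x,A)\in\Gamma$ then $\Gamma\vdash v\,x:A$; (prod) if $\mathcal R\,s_1\,s_2\,s_3$, $\Gamma\vdash A:c\,s_1$ and for every $y\notin\mathrm{dom}\,\Gamma$, $\Gamma,y:A\vdash B[x:=v\,y]:c\,s_2$, then $\Gamma\vdash\Pi[x:A]B:c\,s_3$; (abs) if $\mathcal R\,s_1\,s_2\,s_3$, $\Gamma\vdash A:c\,s_1$, for every $z\notin\mathrm{dom}\,\Gamma$, $\Gamma,z:A\vdash B[y:=v\,z]:c\,s_2$, and for every $z\notin\mathrm{dom}\,\Gamma$, $\Gamma,z:A\vdash M[x:=v\,z]:B[y:=v\,z]$, then $\Gamma\vdash\lambda[x:A]M:\Pi[y:A]B$; (app) if $\Gamma\vdash M:\Pi[x:A]B$, $\Gamma\vdash N:A$ and $\Gamma\vdash B[x:=N]:c\,s$ for some $s$, then $\Gamma\vdash M\cdot N:B[x:=N]$; (conv) if $\Gamma\vdash M:A$, $A\simeq_\beta B$ and $\Gamma\vdash B:c\,s$ for some $s$, then $\Gamma\vdash M:B$. (The premises quantified over all fresh names in (prod) and (abs) are infinitely branching.) A substitution $\sigma$ is well-typed from $\Gamma$ to $\Delta$, written $\sigma:\Gamma\rightharpoonup\Delta$, if for every $(x,A)\in\Gamma$ we have $\Delta\vdash\sigma\,x:A\bullet\sigma$. *)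

theory Defs
  imports Main
begin

(* Raw first-order terms: constants of type 'c, variables of type 'v.
   Lam x A M  =  lambda[x:A]M,  Pi x A B = Pi[x:A]B,  App M N = M . N *)
datatype ('c, 'v) trm =
    Cst 'c
  | Var 'v
  | Lam 'v "('c, 'v) trm" "('c, 'v) trm"
  | Pi 'v "('c, 'v) trm" "('c, 'v) trm"
  | App "('c, 'v) trm" "('c, 'v) trm"

primrec fv :: "('c, 'v) trm \<Rightarrow> 'v list" where
  "fv (Cst k) = []"
| "fv (Var x) = [x]"
| "fv (Lam x A M) = fv A @ removeAll x (fv M)"
| "fv (Pi x A B) = fv A @ removeAll x (fv B)"
| "fv (App M N) = fv M @ fv N"

definition Xp :: "('v \<Rightarrow> nat) \<Rightarrow> (nat \<Rightarrow> 'v) \<Rightarrow> (nat list \<Rightarrow> nat) \<Rightarrow> 'v list \<Rightarrow> 'v" where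
  "Xp enc dec chi xs = dec (chi (map enc xs))"

definition Xs :: "('v \<Rightarrow> nat) \<Rightarrow> (nat \<Rightarrow> 'v) \<Rightarrow> (nat list \<Rightarrow> nat)
    \<Rightarrow> ('v \<Rightarrow> ('c, 'v) trm) \<Rightarrow> 'v list \<Rightarrow> 'v" where
  "Xs enc dec chi \<sigma> xs = Xp enc dec chi (concat (map (\<lambda>y. fv (\<sigma> y)) xs))"

primrec sbst :: "('v \<Rightarrow> nat) \<Rightarrow> (nat \<Rightarrow> 'v) \<Rightarrow> (nat list \<Rightarrow> nat)
    \<Rightarrow> ('c, 'v) trm \<Rightarrow> ('v \<Rightarrow> ('c, 'v) trm) \<Rightarrow> ('c, 'v) trm" where
  "sbst enc dec chi (Cst k) \<sigma> = Cst k"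
| "sbst enc dec chi (Var x) \<sigma> = \<sigma> x"
| "sbst enc dec chi (App M N) \<sigma> = App (sbst enc dec chi M \<sigma>) (sbst enc dec chi N \<sigma>)"
| "sbst enc dec chi (Lam x A M) \<sigma> =
     (let y = Xs enc dec chi \<sigma> (removeAll x (fv M))
      in Lam y (sbst enc dec chi A \<sigma>) (sbst enc dec chi M (\<sigma>(x := Var y))))"
| "sbst enc dec chi (Pi x A B) \<sigma> =
     (let y = Xs enc dec chi \<sigma> (removeAll x (fv B))
      in Pi y (sbst enc dec chi A \<sigma>) (sbst enc dec chi B (\<sigma>(x := Var y))))"

definition usubst :: "('v \<Rightarrow> nat) \<Rightarrow> (nat \<Rightarrow> 'v) \<Rightarrow> (nat list \<Rightarrow> nat)
    \<Rightarrow> ('c, 'v) trm \<Rightarrow> 'v \<Rightarrow> ('c, 'v) trm \<Rightarrow> ('c, 'v) trm" where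
  "usubst enc dec chi M x N = sbst enc dec chi M (Var(x := N))"

inductive alpha :: "('v \<Rightarrow> nat) \<Rightarrow> (nat \<Rightarrow> 'v) \<Rightarrow> (nat list \<Rightarrow> nat)
    \<Rightarrow> ('c, 'v) trm \<Rightarrow> ('c, 'v) trm \<Rightarrow> bool"
  for enc dec chi where
  a_cst: "alpha enc dec chi (Cst k) (Cst k)"
| a_var: "alpha enc dec chi (Var x) (Var x)"
| a_app: "alpha enc dec chi M M' \<Longrightarrow> alpha enc dec chi N N' \<Longrightarrow>
          alpha enc dec chi (App M N) (App M' N')"
| a_lam: "alpha enc dec chi A A' \<Longrightarrow> y \<notin> set (removeAll x (fv M)) \<Longrightarrow>
          y \<notin> set (removeAll x' (fv M')) \<Longrightarrow>
          usubst enc dec chi M x (Var y) = usubst enc dec chi M' x' (Var y) \<Longrightarrow>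
          alpha enc dec chi (Lam x A M) (Lam x' A' M')"
| a_pi: "alpha enc dec chi A A' \<Longrightarrow> y \<notin> set (removeAll x (fv M)) \<Longrightarrow>
          y \<notin> set (removeAll x' (fv M')) \<Longrightarrow>
          usubst enc dec chi M x (Var y) = usubst enc dec chi M' x' (Var y) \<Longrightarrow>
          alpha enc dec chi (Pi x A M) (Pi x' A' M')"

inductive beta :: "('v \<Rightarrow> nat) \<Rightarrow> (nat \<Rightarrow> 'v) \<Rightarrow> (nat list \<Rightarrow> nat)
    \<Rightarrow> ('c, 'v) trm \<Rightarrow> ('c, 'v) trm \<Rightarrow> bool"
  for enc dec chi where
  b_contr: "beta enc dec chi (App (Lam x A M) N) (usubst enc dec chi M x N)"
| b_lam_body: "beta enc dec chi M M' \<Longrightarrow> beta enc dec chi (Lam x A M) (Lam x A M')"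
| b_pi_body: "beta enc dec chi M M' \<Longrightarrow> beta enc dec chi (Pi x A M) (Pi x A M')"
| b_lam_dom: "beta enc dec chi A A' \<Longrightarrow> beta enc dec chi (Lam x A M) (Lam x A' M)"
| b_pi_dom: "beta enc dec chi A A' \<Longrightarrow> beta enc dec chi (Pi x A M) (Pi x A' M)"
| b_app_l: "beta enc dec chi M N \<Longrightarrow> beta enc dec chi (App M P) (App N P)"
| b_app_r: "beta enc dec chi M N \<Longrightarrow> beta enc dec chi (App P M) (App P N)"

inductive bconv :: "('v \<Rightarrow> nat) \<Rightarrow> (nat \<Rightarrow> 'v) \<Rightarrow> (nat list \<Rightarrow> nat)
    \<Rightarrow> ('c, 'v) trm \<Rightarrow> ('c, 'v) trm \<Rightarrow> bool"
  for enc dec chi where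
  c_alpha: "alpha enc dec chi M N \<Longrightarrow> bconv enc dec chi M N"
| c_beta: "beta enc dec chi M N \<Longrightarrow> bconv enc dec chi M N"
| c_refl: "bconv enc dec chi M M"
| c_sym: "bconv enc dec chi M N \<Longrightarrow> bconv enc dec chi N M"
| c_trans: "bconv enc dec chi M N \<Longrightarrow> bconv enc dec chi N P \<Longrightarrow> bconv enc dec chi M P"

type_synonym ('c, 'v) ctx = "('v \<times> ('c, 'v) trm) list"

(* Pure Type System with axioms ax and rules rl;
   ctx_ok ... \<Gamma> is "\<Gamma> ok", typ ... \<Gamma> M A is "\<Gamma> \<turnstile> M : A" *)
inductive ctx_ok :: "('v \<Rightarrow> nat) \<Rightarrow> (nat \<Rightarrow> 'v) \<Rightarrow> (nat list \<Rightarrow> nat)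
    \<Rightarrow> ('c \<Rightarrow> 'c \<Rightarrow> bool) \<Rightarrow> ('c \<Rightarrow> 'c \<Rightarrow> 'c \<Rightarrow> bool) \<Rightarrow> ('c, 'v) ctx \<Rightarrow> bool"
  and has_typ :: "('v \<Rightarrow> nat) \<Rightarrow> (nat \<Rightarrow> 'v) \<Rightarrow> (nat list \<Rightarrow> nat)
    \<Rightarrow> ('c \<Rightarrow> 'c \<Rightarrow> bool) \<Rightarrow> ('c \<Rightarrow> 'c \<Rightarrow> 'c \<Rightarrow> bool)
    \<Rightarrow> ('c, 'v) ctx \<Rightarrow> ('c, 'v) trm \<Rightarrow> ('c, 'v) trm \<Rightarrow> bool"
  for enc dec chi ax rl where
  t_nil: "ctx_ok enc dec chi ax rl []"
| t_cons: "ctx_ok enc dec chi ax rl \<Gamma> \<Longrightarrow> has_typ enc dec chi ax rl \<Gamma> A (Cst s) \<Longrightarrow>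
           x \<notin> set (map fst \<Gamma>) \<Longrightarrow> ctx_ok enc dec chi ax rl ((x, A) # \<Gamma>)"
| t_sort: "ctx_ok enc dec chi ax rl \<Gamma> \<Longrightarrow> ax s1 s2 \<Longrightarrow>
           has_typ enc dec chi ax rl \<Gamma> (Cst s1) (Cst s2)"
| t_var: "ctx_ok enc dec chi ax rl \<Gamma> \<Longrightarrow> (x, A) \<in> set \<Gamma> \<Longrightarrow>
           has_typ enc dec chi ax rl \<Gamma> (Var x) A"
| t_prod: "rl s1 s2 s3 \<Longrightarrow> has_typ enc dec chi ax rl \<Gamma> A (Cst s1) \<Longrightarrow>
           (\<forall>y. y \<notin> set (map fst \<Gamma>) \<longrightarrow>
              has_typ enc dec chi ax rl ((y, A) # \<Gamma>) (usubst enc dec chi B x (Var y)) (Cst s2)) \<Longrightarrow>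
           has_typ enc dec chi ax rl \<Gamma> (Pi x A B) (Cst s3)"
| t_abs: "rl s1 s2 s3 \<Longrightarrow> has_typ enc dec chi ax rl \<Gamma> A (Cst s1) \<Longrightarrow>
           (\<forall>z. z \<notin> set (map fst \<Gamma>) \<longrightarrow>
              has_typ enc dec chi ax rl ((z, A) # \<Gamma>) (usubst enc dec chi B y (Var z)) (Cst s2)) \<Longrightarrow>
           (\<forall>z. z \<notin> set (map fst \<Gamma>) \<longrightarrow>
              has_typ enc dec chi ax rl ((z, A) # \<Gamma>) (usubst enc dec chi M x (Var z))
                 (usubst enc dec chi B y (Var z))) \<Longrightarrow>
           has_typ enc dec chi ax rl \<Gamma> (Lam x A M) (Pi y A B)"
| t_app: "has_typ enc dec chi ax rl \<Gamma> M (Pi x A B) \<Longrightarrow> has_typ enc dec chi ax rl \<Gamma> N A \<Longrightarrow>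
           has_typ enc dec chi ax rl \<Gamma> (usubst enc dec chi B x N) (Cst s) \<Longrightarrow>
           has_typ enc dec chi ax rl \<Gamma> (App M N) (usubst enc dec chi B x N)"
| t_conv: "has_typ enc dec chi ax rl \<Gamma> M A \<Longrightarrow> bconv enc dec chi A B \<Longrightarrow>
           has_typ enc dec chi ax rl \<Gamma> B (Cst s) \<Longrightarrow> has_typ enc dec chi ax rl \<Gamma> M B"

definition wt_subst :: "('v \<Rightarrow> nat) \<Rightarrow> (nat \<Rightarrow> 'v) \<Rightarrow> (nat list \<Rightarrow> nat)
    \<Rightarrow> ('c \<Rightarrow> 'c \<Rightarrow> bool) \<Rightarrow> ('c \<Rightarrow> 'c \<Rightarrow> 'c \<Rightarrow> bool)
    \<Rightarrow> ('v \<Rightarrow> ('c, 'v) trm) \<Rightarrow> ('c, 'v) ctx \<Rightarrow> ('c, 'v) ctx \<Rightarrow> bool" where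
  "wt_subst enc dec chi ax rl \<sigma> \<Gamma> \<Delta> \<longleftrightarrow>
     (\<forall>x A. (x, A) \<in> set \<Gamma> \<longrightarrow> has_typ enc dec chi ax rl \<Delta> (\<sigma> x) (sbst enc dec chi A \<sigma>))"

end

theory Submission imports Defs begin

locale pts =
  fixes enc :: "'v \<Rightarrow> nat" and dec :: "nat \<Rightarrow> 'v" and chi :: "nat list \<Rightarrow> nat"
    and ax :: "'c \<Rightarrow> 'c \<Rightarrow> bool" and rl :: "'c \<Rightarrow> 'c \<Rightarrow> 'c \<Rightarrow> bool"
  assumes enc_dec: "\<And>n. enc (dec n) = n"
    and chi_fresh: "\<And>ns. chi ns \<notin> set ns"
begin

abbreviation S :: "('c,'v) trm \<Rightarrow> ('v \<Rightarrow> ('c,'v) trm) \<Rightarrow> ('c,'v) trm" where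
  "S M \<sigma> \<equiv> sbst enc dec chi M \<sigma>"
abbreviation XS :: "('v \<Rightarrow> ('c,'v) trm) \<Rightarrow> 'v list \<Rightarrow> 'v" where "XS \<equiv> Xs enc dec chi"

lemma fresh_exists: "\<exists>v::'v. v \<notin> set L"
proof -
  have "inj dec" by (metis enc_dec injI)
  hence "infinite (range dec)" using finite_imageD[of dec UNIV] by auto
  hence "infinite (UNIV::'v set)" using infinite_super[of "range dec" UNIV] by auto
  from ex_new_if_finite[OF this, of "set L"] show ?thesis by auto
qed

lemma XS_fresh: "Xs enc dec chi (\<sigma>::'v \<Rightarrow> ('c,'v) trm) L \<notin> set (concat (map (\<lambda>w. fv (\<sigma> w)) L))"
proof
  let ?xs = "concat (map (\<lambda>w. fv (\<sigma> w)) L)"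
  assume "XS \<sigma> L \<in> set ?xs"
  hence "enc (dec (chi (map enc ?xs))) \<in> set (map enc ?xs)"
    unfolding Xs_def Xp_def by simp
  thus False using chi_fresh[of "map enc ?xs"] by (simp add: enc_dec)
qed

lemma XS_fresh': "w \<in> set L \<Longrightarrow> Xs enc dec chi (\<sigma>::'v \<Rightarrow> ('c,'v) trm) L \<notin> set (fv (\<sigma> w))"
  using XS_fresh[of \<sigma> L] by auto

lemma sbst_cong: "(\<forall>w\<in>set (fv M). \<sigma> w = \<tau> w) \<Longrightarrow> S M \<sigma> = S M \<tau>"
proof (induction M arbitrary: \<sigma> \<tau>)
  case (Lam x A M)
  have e: "XS \<sigma> (removeAll x (fv M)) = XS \<tau> (removeAll x (fv M))"
  proof -
    have "map (\<lambda>w. fv (\<sigma> w)) (removeAll x (fv M)) = map (\<lambda>w. fv (\<tau> w)) (removeAll x (fv M))"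
      using Lam.prems by (intro map_cong) auto
    thus ?thesis unfolding Xs_def by (rule arg_cong[where f="\<lambda>l. Xp enc dec chi (concat l)"])
  qed
  show ?case using Lam by (simp add: e Let_def)
next
  case (Pi x A M)
  have e: "XS \<sigma> (removeAll x (fv M)) = XS \<tau> (removeAll x (fv M))"
  proof -
    have "map (\<lambda>w. fv (\<sigma> w)) (removeAll x (fv M)) = map (\<lambda>w. fv (\<tau> w)) (removeAll x (fv M))"
      using Pi.prems by (intro map_cong) auto
    thus ?thesis unfolding Xs_def by (rule arg_cong[where f="\<lambda>l. Xp enc dec chi (concat l)"])
  qed
  show ?case using Pi by (simp add: e Let_def)
qed auto

lemma removeAll_concat_upd:
  "(\<forall>w\<in>set L. w \<noteq> x \<longrightarrow> y \<notin> set (fv (\<sigma> w))) \<Longrightarrow>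
   removeAll y (concat (map (\<lambda>w. fv (if w = x then Var y else \<sigma> w)) L)) = concat (map (\<lambda>w. fv (\<sigma> w)) (removeAll x L))"
  by (induction L) auto

lemma fv_sbst: "fv (S M \<sigma>) = concat (map (\<lambda>w. fv (\<sigma> w)) (fv M))"
proof (induction M arbitrary: \<sigma>)
  case (Lam x A M)
  let ?y = "XS \<sigma> (removeAll x (fv M))"
  have "\<forall>w\<in>set (fv M). w \<noteq> x \<longrightarrow> ?y \<notin> set (fv (\<sigma> w))"
    using XS_fresh'[of _ "removeAll x (fv M)" \<sigma>] by auto
  thus ?case using Lam by (simp add: Let_def removeAll_concat_upd)
next
  case (Pi x A M)
  let ?y = "XS \<sigma> (removeAll x (fv M))"
  have "\<forall>w\<in>set (fv M). w \<noteq> x \<longrightarrow> ?y \<notin> set (fv (\<sigma> w))"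
    using XS_fresh'[of _ "removeAll x (fv M)" \<sigma>] by auto
  thus ?case using Pi by (simp add: Let_def removeAll_concat_upd)
qed auto

lemma concat_map_concat: "concat (map f (concat (map g L))) = concat (map (\<lambda>w. concat (map f (g w))) L)"
  by (induction L) auto

definition comp :: "('v \<Rightarrow> ('c,'v) trm) \<Rightarrow> ('v \<Rightarrow> ('c,'v) trm) \<Rightarrow> 'v \<Rightarrow> ('c,'v) trm" where
  "comp \<sigma> \<tau> = (\<lambda>w. S (\<sigma> w) \<tau>)"

lemma sbst_comp: "S (S M \<sigma>) \<tau> = S M (comp \<sigma> \<tau>)"
proof (induction M arbitrary: \<sigma> \<tau>)
  case (Lam x A M)
  define y where "y = XS \<sigma> (removeAll x (fv M))"
  define y1 where "y1 = XS \<tau> (removeAll y (fv (S M (\<sigma>(x := Var y)))))"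
  have fr: "\<forall>w\<in>set (fv M). w \<noteq> x \<longrightarrow> y \<notin> set (fv (\<sigma> w))"
    using XS_fresh'[of _ "removeAll x (fv M)" \<sigma>] y_def by auto
  have r: "removeAll y (fv (S M (\<sigma>(x := Var y)))) = concat (map (\<lambda>w. fv (\<sigma> w)) (removeAll x (fv M)))"
    using removeAll_concat_upd[OF fr] by (simp add: fv_sbst)
  have "y1 = XS (comp \<sigma> \<tau>) (removeAll x (fv M))"
    unfolding y1_def r Xs_def comp_def
    by (simp only: concat_map_concat fv_sbst)
  moreover have "S M (comp (\<sigma>(x := Var y)) (\<tau>(y := Var y1))) = S M ((comp \<sigma> \<tau>)(x := Var y1))"
  proof (rule sbst_cong, intro ballI)
    fix w assume w: "w \<in> set (fv M)"
    show "comp (\<sigma>(x := Var y)) (\<tau>(y := Var y1)) w = ((comp \<sigma> \<tau>)(x := Var y1)) w"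
    proof (cases "w = x")
      case False
      hence "y \<notin> set (fv (\<sigma> w))" using fr w by auto
      hence "S (\<sigma> w) (\<tau>(y := Var y1)) = S (\<sigma> w) \<tau>" by (intro sbst_cong) auto
      thus ?thesis using False by (simp add: comp_def)
    qed (simp add: comp_def)
  qed
  ultimately show ?case
    unfolding sbst.simps Let_def y_def[symmetric] y1_def[symmetric] Lam.IH by simp
next
  case (Pi x A M)
  define y where "y = XS \<sigma> (removeAll x (fv M))"
  define y1 where "y1 = XS \<tau> (removeAll y (fv (S M (\<sigma>(x := Var y)))))"
  have fr: "\<forall>w\<in>set (fv M). w \<noteq> x \<longrightarrow> y \<notin> set (fv (\<sigma> w))"
    using XS_fresh'[of _ "removeAll x (fv M)" \<sigma>] y_def by auto
  have r: "removeAll y (fv (S M (\<sigma>(x := Var y)))) = concat (map (\<lambda>w. fv (\<sigma> w)) (removeAll x (fv M)))"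
    using removeAll_concat_upd[OF fr] by (simp add: fv_sbst)
  have "y1 = XS (comp \<sigma> \<tau>) (removeAll x (fv M))"
    unfolding y1_def r Xs_def comp_def
    by (simp only: concat_map_concat fv_sbst)
  moreover have "S M (comp (\<sigma>(x := Var y)) (\<tau>(y := Var y1))) = S M ((comp \<sigma> \<tau>)(x := Var y1))"
  proof (rule sbst_cong, intro ballI)
    fix w assume w: "w \<in> set (fv M)"
    show "comp (\<sigma>(x := Var y)) (\<tau>(y := Var y1)) w = ((comp \<sigma> \<tau>)(x := Var y1)) w"
    proof (cases "w = x")
      case False
      hence "y \<notin> set (fv (\<sigma> w))" using fr w by auto
      hence "S (\<sigma> w) (\<tau>(y := Var y1)) = S (\<sigma> w) \<tau>" by (intro sbst_cong) auto
      thus ?thesis using False by (simp add: comp_def)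
    qed (simp add: comp_def)
  qed
  ultimately show ?case
    unfolding sbst.simps Let_def y_def[symmetric] y1_def[symmetric] Pi.IH by simp
qed (auto simp: comp_def)


abbreviation U :: "('c,'v) trm \<Rightarrow> 'v \<Rightarrow> ('c,'v) trm \<Rightarrow> ('c,'v) trm" where "U \<equiv> usubst enc dec chi"
abbreviation al :: "('c,'v) trm \<Rightarrow> ('c,'v) trm \<Rightarrow> bool" where "al \<equiv> alpha enc dec chi"

lemma comp_Var_Var: "comp Var Var = Var"
  by (rule ext) (simp add: comp_def)

lemma subst_fresh:
  "w \<notin> set (removeAll x (fv M)) \<Longrightarrow> S (U M x (Var w)) (\<sigma>(w := N)) = S M (\<sigma>(x := N))"
  unfolding usubst_def sbst_comp by (rule sbst_cong) (auto simp: comp_def)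

lemma usubst_after:
  "(\<forall>w\<in>set (fv M). w \<noteq> x \<longrightarrow> u \<notin> set (fv (\<sigma> w))) \<Longrightarrow>
   U (S M (\<sigma>(x := Var u))) u P = S M ((comp \<sigma> Var)(x := P))"
  unfolding usubst_def sbst_comp
proof (rule sbst_cong, intro ballI)
  fix w assume h: "\<forall>w\<in>set (fv M). w \<noteq> x \<longrightarrow> u \<notin> set (fv (\<sigma> w))" and w: "w \<in> set (fv M)"
  show "comp (\<sigma>(x := Var u)) (Var(u := P)) w = ((comp \<sigma> Var)(x := P)) w"
  proof (cases "w = x")
    case False
    hence "u \<notin> set (fv (\<sigma> w))" using h w by auto
    hence "S (\<sigma> w) (Var(u := P)) = S (\<sigma> w) Var" by (intro sbst_cong) auto
    thus ?thesis using False by (simp add: comp_def)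
  qed (simp add: comp_def)
qed

lemma rename_iota:
  "(\<forall>w\<in>set (fv M). w \<noteq> x \<longrightarrow> u \<notin> set (fv (\<sigma> w))) \<Longrightarrow>
   U (S M (\<sigma>(x := Var u))) u (Var z) = S (S M (\<sigma>(x := Var z))) Var"
  unfolding usubst_after sbst_comp by (rule sbst_cong) (auto simp: comp_def)

lemma XS_fresh_body: "\<forall>w\<in>set (fv M). w \<noteq> x \<longrightarrow> XS \<sigma> (removeAll x (fv M)) \<notin> set (fv (\<sigma> w))"
  using XS_fresh'[of _ "removeAll x (fv M)" \<sigma>] by auto

lemma concat_rename: "concat (map (\<lambda>w. fv ((Var(x := Var v)) w)) L) = map (\<lambda>w. if w = x then v else w) L"
  by (induction L) auto

lemma fv_usubst_var: "fv (U M x (Var v)) = map (\<lambda>w. if w = x then v else w) (fv M)"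
  unfolding usubst_def fv_sbst by (rule concat_rename)

lemma removeAll_map_rename:
  "v \<notin> set (removeAll x L) \<Longrightarrow> removeAll v (map (\<lambda>w. if w = x then v else w) L) = removeAll x L"
  by (induction L) auto

lemma alpha_rm:
  "U M x (Var v) = U M' x' (Var v) \<Longrightarrow> v \<notin> set (removeAll x (fv M)) \<Longrightarrow>
   v \<notin> set (removeAll x' (fv M')) \<Longrightarrow> removeAll x (fv M) = removeAll x' (fv M')"
  by (metis fv_usubst_var removeAll_map_rename)

lemma alpha_sbst_eq: "al M N \<Longrightarrow> S M \<sigma> = S N \<sigma>"
proof (induction arbitrary: \<sigma> rule: alpha.induct)
  case (a_lam A A' y x M x' M')
  have rm: "removeAll x (fv M) = removeAll x' (fv M')" using alpha_rm a_lam.hyps by blast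
  define u where "u = XS \<sigma> (removeAll x (fv M))"
  have "S M (\<sigma>(x := Var u)) = S (U M x (Var y)) (\<sigma>(y := Var u))"
    by (rule subst_fresh[OF a_lam.hyps(2), symmetric])
  also have "\<dots> = S M' (\<sigma>(x' := Var u))"
    unfolding a_lam.hyps(4) by (rule subst_fresh[OF a_lam.hyps(3)])
  finally show ?case
    unfolding sbst.simps Let_def u_def[symmetric] rm[symmetric] a_lam.IH by simp
next
  case (a_pi A A' y x M x' M')
  have rm: "removeAll x (fv M) = removeAll x' (fv M')" using alpha_rm a_pi.hyps by blast
  define u where "u = XS \<sigma> (removeAll x (fv M))"
  have "S M (\<sigma>(x := Var u)) = S (U M x (Var y)) (\<sigma>(y := Var u))"
    by (rule subst_fresh[OF a_pi.hyps(2), symmetric])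
  also have "\<dots> = S M' (\<sigma>(x' := Var u))"
    unfolding a_pi.hyps(4) by (rule subst_fresh[OF a_pi.hyps(3)])
  finally show ?case
    unfolding sbst.simps Let_def u_def[symmetric] rm[symmetric] a_pi.IH by simp
qed auto

lemma alpha_refl: "al M M"
proof (induction M)
  case (Lam x A M)
  obtain v where v: "v \<notin> set (removeAll x (fv M))" using fresh_exists by blast
  show ?case by (rule alpha.a_lam[OF Lam.IH(1) v v refl])
next
  case (Pi x A M)
  obtain v where v: "v \<notin> set (removeAll x (fv M))" using fresh_exists by blast
  show ?case by (rule alpha.a_pi[OF Pi.IH(1) v v refl])
qed (auto intro: alpha.a_cst alpha.a_var alpha.a_app)

lemma alpha_sym: "al M N \<Longrightarrow> al N M"
proof (induction rule: alpha.induct)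
  case (a_lam A A' y x M x' M')
  show ?case by (rule alpha.a_lam[OF a_lam.IH a_lam.hyps(3) a_lam.hyps(2) a_lam.hyps(4)[symmetric]])
next
  case (a_pi A A' y x M x' M')
  show ?case by (rule alpha.a_pi[OF a_pi.IH a_pi.hyps(3) a_pi.hyps(2) a_pi.hyps(4)[symmetric]])
qed (auto intro: alpha.a_cst alpha.a_var alpha.a_app)

lemma alpha_fv: "al M N \<Longrightarrow> fv M = fv N"
proof (induction rule: alpha.induct)
  case (a_lam A A' y x M x' M')
  show ?case using alpha_rm[OF a_lam.hyps(4,2,3)] a_lam.IH by simp
next
  case (a_pi A A' y x M x' M')
  show ?case using alpha_rm[OF a_pi.hyps(4,2,3)] a_pi.IH by simp
qed auto

lemma alpha_iota: "al M (S M Var)"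
proof (induction M)
  case (Lam x A M)
  define u where "u = XS Var (removeAll x (fv M))"
  obtain v where v: "v \<notin> set (removeAll x (fv M) @ removeAll u (fv (S M (Var(x := Var u)))))"
    using fresh_exists by blast
  have "U (S M (Var(x := Var u))) u (Var v) = S M ((comp Var Var)(x := Var v))"
    by (rule usubst_after[OF XS_fresh_body[of M x Var, folded u_def]])
  hence e: "U M x (Var v) = U (S M (Var(x := Var u))) u (Var v)"
    by (simp add: comp_Var_Var usubst_def)
  have "al (Lam x A M) (Lam u (S A Var) (S M (Var(x := Var u))))"
    using alpha.a_lam[OF Lam.IH(1) _ _ e] v by auto
  thus ?case unfolding sbst.simps Let_def u_def .
next
  case (Pi x A M)
  define u where "u = XS Var (removeAll x (fv M))"
  obtain v where v: "v \<notin> set (removeAll x (fv M) @ removeAll u (fv (S M (Var(x := Var u)))))"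
    using fresh_exists by blast
  have "U (S M (Var(x := Var u))) u (Var v) = S M ((comp Var Var)(x := Var v))"
    by (rule usubst_after[OF XS_fresh_body[of M x Var, folded u_def]])
  hence e: "U M x (Var v) = U (S M (Var(x := Var u))) u (Var v)"
    by (simp add: comp_Var_Var usubst_def)
  have "al (Pi x A M) (Pi u (S A Var) (S M (Var(x := Var u))))"
    using alpha.a_pi[OF Pi.IH(1) _ _ e] v by auto
  thus ?case unfolding sbst.simps Let_def u_def .
qed (auto intro: alpha.a_cst alpha.a_var alpha.a_app)

lemma alpha_subst_cong: "(\<forall>w\<in>set (fv M). al (\<sigma> w) (\<tau> w)) \<Longrightarrow> al (S M \<sigma>) (S M \<tau>)"
proof (induction M arbitrary: \<sigma> \<tau>)
  case (Lam x A M)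
  define u where "u = XS \<sigma> (removeAll x (fv M))"
  have "map (\<lambda>w. fv (\<sigma> w)) (removeAll x (fv M)) = map (\<lambda>w. fv (\<tau> w)) (removeAll x (fv M))"
    using Lam.prems alpha_fv by (intro map_cong) auto
  hence u': "XS \<tau> (removeAll x (fv M)) = u" unfolding u_def Xs_def by (simp only:)
  obtain v where v: "v \<notin> set (removeAll u (fv (S M (\<sigma>(x := Var u)))) @ removeAll u (fv (S M (\<tau>(x := Var u)))))"
    using fresh_exists by blast
  have e1: "U (S M (\<sigma>(x := Var u))) u (Var v) = S M ((comp \<sigma> Var)(x := Var v))"
    by (rule usubst_after[OF XS_fresh_body[of M x \<sigma>, folded u_def]])
  have e2: "U (S M (\<tau>(x := Var u))) u (Var v) = S M ((comp \<tau> Var)(x := Var v))"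
    by (rule usubst_after[OF XS_fresh_body[of M x \<tau>, unfolded u']])
  have e3: "S M ((comp \<sigma> Var)(x := Var v)) = S M ((comp \<tau> Var)(x := Var v))"
    using Lam.prems by (intro sbst_cong) (auto simp: comp_def intro: alpha_sbst_eq)
  have "al (S A \<sigma>) (S A \<tau>)" using Lam by auto
  hence "al (Lam u (S A \<sigma>) (S M (\<sigma>(x := Var u)))) (Lam u (S A \<tau>) (S M (\<tau>(x := Var u))))"
    using alpha.a_lam e1 e2 e3 v by (metis set_append UnCI)
  thus ?case unfolding sbst.simps Let_def u_def[symmetric] u' .
next
  case (Pi x A M)
  define u where "u = XS \<sigma> (removeAll x (fv M))"
  have "map (\<lambda>w. fv (\<sigma> w)) (removeAll x (fv M)) = map (\<lambda>w. fv (\<tau> w)) (removeAll x (fv M))"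
    using Pi.prems alpha_fv by (intro map_cong) auto
  hence u': "XS \<tau> (removeAll x (fv M)) = u" unfolding u_def Xs_def by (simp only:)
  obtain v where v: "v \<notin> set (removeAll u (fv (S M (\<sigma>(x := Var u)))) @ removeAll u (fv (S M (\<tau>(x := Var u)))))"
    using fresh_exists by blast
  have e1: "U (S M (\<sigma>(x := Var u))) u (Var v) = S M ((comp \<sigma> Var)(x := Var v))"
    by (rule usubst_after[OF XS_fresh_body[of M x \<sigma>, folded u_def]])
  have e2: "U (S M (\<tau>(x := Var u))) u (Var v) = S M ((comp \<tau> Var)(x := Var v))"
    by (rule usubst_after[OF XS_fresh_body[of M x \<tau>, unfolded u']])
  have e3: "S M ((comp \<sigma> Var)(x := Var v)) = S M ((comp \<tau> Var)(x := Var v))"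
    using Pi.prems by (intro sbst_cong) (auto simp: comp_def intro: alpha_sbst_eq)
  have "al (S A \<sigma>) (S A \<tau>)" using Pi by auto
  hence "al (Pi u (S A \<sigma>) (S M (\<sigma>(x := Var u)))) (Pi u (S A \<tau>) (S M (\<tau>(x := Var u))))"
    using alpha.a_pi e1 e2 e3 v by (metis set_append UnCI)
  thus ?case unfolding sbst.simps Let_def u_def[symmetric] u' .
qed (auto intro: alpha.a_cst alpha.a_var alpha.a_app)


abbreviation bt :: "('c,'v) trm \<Rightarrow> ('c,'v) trm \<Rightarrow> bool" where "bt \<equiv> beta enc dec chi"
abbreviation bc :: "('c,'v) trm \<Rightarrow> ('c,'v) trm \<Rightarrow> bool" where "bc \<equiv> bconv enc dec chi"

lemma fv_usubst_sub: "set (fv (U M x N)) \<subseteq> set (removeAll x (fv M)) \<union> set (fv N)"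
  unfolding usubst_def fv_sbst by (auto split: if_splits)

lemma beta_fv: "bt M N \<Longrightarrow> set (fv N) \<subseteq> set (fv M)"
  by (induction rule: beta.induct) (use fv_usubst_sub in auto)

lemma bconv_ctx:
  assumes "\<And>P P'. al P P' \<Longrightarrow> al (f P) (f P')" and "\<And>P P'. bt P P' \<Longrightarrow> bt (f P) (f P')"
  shows "bc P P' \<Longrightarrow> bc (f P) (f P')"
  by (induction rule: bconv.induct) (auto intro: bconv.intros assms)

lemma alpha_lam_body: "al P P' \<Longrightarrow> al (Lam y A P) (Lam y A P')"
proof -
  assume h: "al P P'"
  obtain v where v: "v \<notin> set (removeAll y (fv P) @ removeAll y (fv P'))" using fresh_exists by blast
  have e: "U P y (Var v) = U P' y (Var v)" unfolding usubst_def by (rule alpha_sbst_eq[OF h])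
  show ?thesis using alpha.a_lam[OF alpha_refl _ _ e] v by simp
qed

lemma alpha_pi_body: "al P P' \<Longrightarrow> al (Pi y A P) (Pi y A P')"
proof -
  assume h: "al P P'"
  obtain v where v: "v \<notin> set (removeAll y (fv P) @ removeAll y (fv P'))" using fresh_exists by blast
  have e: "U P y (Var v) = U P' y (Var v)" unfolding usubst_def by (rule alpha_sbst_eq[OF h])
  show ?thesis using alpha.a_pi[OF alpha_refl _ _ e] v by simp
qed

lemma alpha_lam_dom: "al A A' \<Longrightarrow> al (Lam y A P) (Lam y A' P)"
proof -
  assume h: "al A A'"
  obtain v where v: "v \<notin> set (removeAll y (fv P))" using fresh_exists by blast
  show ?thesis by (rule alpha.a_lam[OF h v v refl])
qed

lemma alpha_pi_dom: "al A A' \<Longrightarrow> al (Pi y A P) (Pi y A' P)"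
proof -
  assume h: "al A A'"
  obtain v where v: "v \<notin> set (removeAll y (fv P))" using fresh_exists by blast
  show ?thesis by (rule alpha.a_pi[OF h v v refl])
qed

lemma bconv_lam_body: "bc P P' \<Longrightarrow> bc (Lam y A P) (Lam y A P')"
  by (rule bconv_ctx[where f="\<lambda>P. Lam y A P"]) (auto intro: alpha_lam_body beta.b_lam_body)
lemma bconv_pi_body: "bc P P' \<Longrightarrow> bc (Pi y A P) (Pi y A P')"
  by (rule bconv_ctx[where f="\<lambda>P. Pi y A P"]) (auto intro: alpha_pi_body beta.b_pi_body)
lemma bconv_lam_dom: "bc P P' \<Longrightarrow> bc (Lam y P M) (Lam y P' M)"
  by (rule bconv_ctx[where f="\<lambda>P. Lam y P M"]) (auto intro: alpha_lam_dom beta.b_lam_dom)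
lemma bconv_pi_dom: "bc P P' \<Longrightarrow> bc (Pi y P M) (Pi y P' M)"
  by (rule bconv_ctx[where f="\<lambda>P. Pi y P M"]) (auto intro: alpha_pi_dom beta.b_pi_dom)
lemma bconv_app_l: "bc P P' \<Longrightarrow> bc (App P M) (App P' M)"
  by (rule bconv_ctx[where f="\<lambda>P. App P M"]) (auto intro: alpha.a_app alpha_refl beta.b_app_l)
lemma bconv_app_r: "bc P P' \<Longrightarrow> bc (App M P) (App M P')"
  by (rule bconv_ctx[where f="\<lambda>P. App M P"]) (auto intro: alpha.a_app alpha_refl beta.b_app_r)

lemma alpha_rename_lam:
  assumes "\<forall>w\<in>set (fv M). w \<noteq> x \<longrightarrow> u \<notin> set (fv (\<sigma> w))"
    and "\<forall>w\<in>set (fv M). w \<noteq> x \<longrightarrow> u' \<notin> set (fv (\<sigma> w))"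
  shows "al (Lam u C (S M (\<sigma>(x := Var u)))) (Lam u' C (S M (\<sigma>(x := Var u'))))"
proof -
  obtain v where v: "v \<notin> set (removeAll u (fv (S M (\<sigma>(x := Var u)))) @ removeAll u' (fv (S M (\<sigma>(x := Var u')))))"
    using fresh_exists by blast
  have e: "U (S M (\<sigma>(x := Var u))) u (Var v) = U (S M (\<sigma>(x := Var u'))) u' (Var v)"
    unfolding rename_iota[OF assms(1)] rename_iota[OF assms(2)] ..
  show ?thesis using alpha.a_lam[OF alpha_refl _ _ e] v by simp
qed

lemma alpha_rename_pi:
  assumes "\<forall>w\<in>set (fv M). w \<noteq> x \<longrightarrow> u \<notin> set (fv (\<sigma> w))"
    and "\<forall>w\<in>set (fv M). w \<noteq> x \<longrightarrow> u' \<notin> set (fv (\<sigma> w))"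
  shows "al (Pi u C (S M (\<sigma>(x := Var u)))) (Pi u' C (S M (\<sigma>(x := Var u'))))"
proof -
  obtain v where v: "v \<notin> set (removeAll u (fv (S M (\<sigma>(x := Var u)))) @ removeAll u' (fv (S M (\<sigma>(x := Var u')))))"
    using fresh_exists by blast
  have e: "U (S M (\<sigma>(x := Var u))) u (Var v) = U (S M (\<sigma>(x := Var u'))) u' (Var v)"
    unfolding rename_iota[OF assms(1)] rename_iota[OF assms(2)] ..
  show ?thesis using alpha.a_pi[OF alpha_refl _ _ e] v by simp
qed

lemma S_lam: "S (Lam x A M) \<sigma> = Lam (XS \<sigma> (removeAll x (fv M))) (S A \<sigma>) (S M (\<sigma>(x := Var (XS \<sigma> (removeAll x (fv M))))))"
  by (simp add: Let_def)
lemma S_pi: "S (Pi x A M) \<sigma> = Pi (XS \<sigma> (removeAll x (fv M))) (S A \<sigma>) (S M (\<sigma>(x := Var (XS \<sigma> (removeAll x (fv M))))))"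
  by (simp add: Let_def)

lemma S_usubst: "S (U M x N) \<sigma> = S M (\<sigma>(x := S N \<sigma>))"
  unfolding usubst_def sbst_comp by (rule sbst_cong) (auto simp: comp_def)

lemma alpha_iota_upd: "\<forall>w\<in>set (fv M). al (((comp \<sigma> Var)(x := P)) w) ((\<sigma>(x := P)) w)"
  by (auto simp: comp_def alpha_refl intro: alpha_sym alpha_iota)

lemma bs_contr: "bc (S (App (Lam x A M) N) \<sigma>) (S (U M x N) \<sigma>)"
proof -
  define u where "u = XS \<sigma> (removeAll x (fv M))"
  have "bt (S (App (Lam x A M) N) \<sigma>) (U (S M (\<sigma>(x := Var u))) u (S N \<sigma>))"
    unfolding sbst.simps Let_def u_def[symmetric] by (rule beta.b_contr)
  also have "U (S M (\<sigma>(x := Var u))) u (S N \<sigma>) = S M ((comp \<sigma> Var)(x := S N \<sigma>))"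
    by (rule usubst_after[OF XS_fresh_body[of M x \<sigma>, folded u_def]])
  finally have 1: "bt (S (App (Lam x A M) N) \<sigma>) (S M ((comp \<sigma> Var)(x := S N \<sigma>)))" .
  have 2: "al (S M ((comp \<sigma> Var)(x := S N \<sigma>))) (S (U M x N) \<sigma>)"
    unfolding S_usubst by (rule alpha_subst_cong[OF alpha_iota_upd])
  show ?thesis using bconv.c_trans[OF bconv.c_beta[OF 1] bconv.c_alpha[OF 2]] .
qed

lemma bs_lam_body:
  assumes IH: "\<And>\<sigma>. bc (S M \<sigma>) (S M' \<sigma>)" and sub: "set (fv M') \<subseteq> set (fv M)"
  shows "bc (S (Lam x A M) \<sigma>) (S (Lam x A M') \<sigma>)"
proof -
  define u where "u = XS \<sigma> (removeAll x (fv M))"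
  define u' where "u' = XS \<sigma> (removeAll x (fv M'))"
  have 1: "bc (Lam u (S A \<sigma>) (S M (\<sigma>(x := Var u)))) (Lam u (S A \<sigma>) (S M' (\<sigma>(x := Var u))))"
    by (rule bconv_lam_body[OF IH])
  have f1: "\<forall>w\<in>set (fv M'). w \<noteq> x \<longrightarrow> u \<notin> set (fv (\<sigma> w))"
    using XS_fresh_body[of M x \<sigma>, folded u_def] sub by blast
  have 2: "al (Lam u (S A \<sigma>) (S M' (\<sigma>(x := Var u)))) (Lam u' (S A \<sigma>) (S M' (\<sigma>(x := Var u'))))"
    by (rule alpha_rename_lam[OF f1 XS_fresh_body[of M' x \<sigma>, folded u'_def]])
  show ?thesis unfolding S_lam u_def[symmetric] u'_def[symmetric]
    using bconv.c_trans[OF 1 bconv.c_alpha[OF 2]] .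
qed

lemma bs_pi_body:
  assumes IH: "\<And>\<sigma>. bc (S M \<sigma>) (S M' \<sigma>)" and sub: "set (fv M') \<subseteq> set (fv M)"
  shows "bc (S (Pi x A M) \<sigma>) (S (Pi x A M') \<sigma>)"
proof -
  define u where "u = XS \<sigma> (removeAll x (fv M))"
  define u' where "u' = XS \<sigma> (removeAll x (fv M'))"
  have 1: "bc (Pi u (S A \<sigma>) (S M (\<sigma>(x := Var u)))) (Pi u (S A \<sigma>) (S M' (\<sigma>(x := Var u))))"
    by (rule bconv_pi_body[OF IH])
  have f1: "\<forall>w\<in>set (fv M'). w \<noteq> x \<longrightarrow> u \<notin> set (fv (\<sigma> w))"
    using XS_fresh_body[of M x \<sigma>, folded u_def] sub by blast
  have 2: "al (Pi u (S A \<sigma>) (S M' (\<sigma>(x := Var u)))) (Pi u' (S A \<sigma>) (S M' (\<sigma>(x := Var u'))))"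
    by (rule alpha_rename_pi[OF f1 XS_fresh_body[of M' x \<sigma>, folded u'_def]])
  show ?thesis unfolding S_pi u_def[symmetric] u'_def[symmetric]
    using bconv.c_trans[OF 1 bconv.c_alpha[OF 2]] .
qed

lemma bs_lam_dom: "bc (S A \<sigma>) (S A' \<sigma>) \<Longrightarrow> bc (S (Lam x A M) \<sigma>) (S (Lam x A' M) \<sigma>)"
  unfolding S_lam by (rule bconv_lam_dom)
lemma bs_pi_dom: "bc (S A \<sigma>) (S A' \<sigma>) \<Longrightarrow> bc (S (Pi x A M) \<sigma>) (S (Pi x A' M) \<sigma>)"
  unfolding S_pi by (rule bconv_pi_dom)

lemma beta_subst: "bt M N \<Longrightarrow> bc (S M \<sigma>) (S N \<sigma>)"
proof (induction arbitrary: \<sigma> rule: beta.induct)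
  case (b_contr x A M N)
  show ?case by (rule bs_contr)
next
  case (b_lam_body M M' x A)
  show ?case by (rule bs_lam_body[OF b_lam_body.IH beta_fv[OF b_lam_body.hyps]])
next
  case (b_pi_body M M' x A)
  show ?case by (rule bs_pi_body[OF b_pi_body.IH beta_fv[OF b_pi_body.hyps]])
next
  case (b_lam_dom A A' x M)
  show ?case by (rule bs_lam_dom[OF b_lam_dom.IH])
next
  case (b_pi_dom A A' x M)
  show ?case by (rule bs_pi_dom[OF b_pi_dom.IH])
next
  case (b_app_l M N P)
  show ?case using bconv_app_l[OF b_app_l.IH] by simp
next
  case (b_app_r M N P)
  show ?case using bconv_app_r[OF b_app_r.IH] by simp
qed

lemma bconv_subst: "bc A B \<Longrightarrow> bc (S A \<sigma>) (S B \<sigma>)"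
proof (induction rule: bconv.induct)
  case (c_alpha M N)
  then show ?case using alpha_sbst_eq bconv.c_refl by metis
next
  case (c_beta M N)
  then show ?case by (rule beta_subst)
qed (auto intro: bconv.intros)


abbreviation OK :: "('c,'v) ctx \<Rightarrow> bool" where "OK \<equiv> ctx_ok enc dec chi ax rl"
abbreviation TY :: "('c,'v) ctx \<Rightarrow> ('c,'v) trm \<Rightarrow> ('c,'v) trm \<Rightarrow> bool" where
  "TY \<equiv> has_typ enc dec chi ax rl"

lemma typ_ok_aux: shows "OK \<Gamma> \<Longrightarrow> True" and "TY \<Gamma> M A \<Longrightarrow> OK \<Gamma>"
  by (induction rule: ctx_ok_has_typ.inducts) auto

lemmas typ_ok = typ_ok_aux(2)

inductive_cases okE: "ctx_ok enc dec chi ax rl ((x,A)#\<Gamma>)"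

definition wk :: "('c,'v) ctx \<Rightarrow> ('c,'v) ctx \<Rightarrow> bool" where
  "wk \<Gamma> \<Gamma>' \<longleftrightarrow> OK \<Gamma>' \<and> set \<Gamma> \<subseteq> set \<Gamma>'"

lemma wk_dom: "wk \<Gamma> \<Gamma>' \<Longrightarrow> y \<notin> set (map fst \<Gamma>') \<Longrightarrow> y \<notin> set (map fst \<Gamma>)"
  unfolding wk_def by force

lemma wk_ext: "wk \<Gamma> \<Gamma>' \<Longrightarrow> TY \<Gamma>' A (Cst s) \<Longrightarrow> y \<notin> set (map fst \<Gamma>') \<Longrightarrow> wk ((y,A)#\<Gamma>) ((y,A)#\<Gamma>')"
  unfolding wk_def by (auto intro: ctx_ok_has_typ.t_cons)

lemma weaken_aux: shows "OK \<Gamma> \<Longrightarrow> True" and "TY \<Gamma> M A \<Longrightarrow> (\<forall>\<Gamma>'. wk \<Gamma> \<Gamma>' \<longrightarrow> TY \<Gamma>' M A)"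
proof (induction rule: ctx_ok_has_typ.inducts)
  case (t_sort \<Gamma> s1 s2)
  then show ?case by (auto simp: wk_def intro: ctx_ok_has_typ.t_sort)
next
  case (t_var \<Gamma> x A)
  then show ?case by (auto simp: wk_def intro: ctx_ok_has_typ.t_var)
next
  case (t_prod s1 s2 s3 \<Gamma> A B x)
  show ?case
  proof (intro allI impI)
    fix \<Gamma>' assume w: "wk \<Gamma> \<Gamma>'"
    have A': "TY \<Gamma>' A (Cst s1)" using t_prod w by blast
    show "TY \<Gamma>' (Pi x A B) (Cst s3)"
    proof (rule ctx_ok_has_typ.t_prod[OF t_prod(1) A'], intro allI impI)
      fix y assume y: "y \<notin> set (map fst \<Gamma>')"
      have "\<forall>\<Gamma>''. wk ((y,A)#\<Gamma>) \<Gamma>'' \<longrightarrow> TY \<Gamma>'' (U B x (Var y)) (Cst s2)"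
        using t_prod wk_dom[OF w y] by blast
      thus "TY ((y,A)#\<Gamma>') (U B x (Var y)) (Cst s2)" using wk_ext[OF w A' y] by blast
    qed
  qed
next
  case (t_abs s1 s2 s3 \<Gamma> A B y M x)
  show ?case
  proof (intro allI impI)
    fix \<Gamma>' assume w: "wk \<Gamma> \<Gamma>'"
    have A': "TY \<Gamma>' A (Cst s1)" using t_abs w by blast
    show "TY \<Gamma>' (Lam x A M) (Pi y A B)"
    proof (rule ctx_ok_has_typ.t_abs[OF t_abs(1) A'], safe)
      fix z assume z: "z \<notin> set (map fst \<Gamma>')"
      have "\<forall>\<Gamma>''. wk ((z,A)#\<Gamma>) \<Gamma>'' \<longrightarrow> TY \<Gamma>'' (U B y (Var z)) (Cst s2)"
        using t_abs wk_dom[OF w z] by blast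
      thus "TY ((z,A)#\<Gamma>') (U B y (Var z)) (Cst s2)" using wk_ext[OF w A' z] by blast
    next
      fix z assume z: "z \<notin> set (map fst \<Gamma>')"
      have "\<forall>\<Gamma>''. wk ((z,A)#\<Gamma>) \<Gamma>'' \<longrightarrow> TY \<Gamma>'' (U M x (Var z)) (U B y (Var z))"
        using t_abs wk_dom[OF w z] by blast
      thus "TY ((z,A)#\<Gamma>') (U M x (Var z)) (U B y (Var z))" using wk_ext[OF w A' z] by blast
    qed
  qed
next
  case (t_app \<Gamma> M x A B N s)
  then show ?case by (blast intro: ctx_ok_has_typ.t_app)
next
  case (t_conv \<Gamma> M A B s)
  then show ?case by (blast intro: ctx_ok_has_typ.t_conv)
qed auto

lemma weaken: "TY \<Gamma> M A \<Longrightarrow> OK \<Gamma>' \<Longrightarrow> set \<Gamma> \<subseteq> set \<Gamma>' \<Longrightarrow> TY \<Gamma>' M A"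
  using weaken_aux(2) wk_def by blast

lemma weaken1: "TY \<Gamma> M A \<Longrightarrow> OK ((z,C)#\<Gamma>) \<Longrightarrow> TY ((z,C)#\<Gamma>) M A"
  using weaken[of \<Gamma> M A "(z,C)#\<Gamma>"] by auto

lemma ctx_types: "OK \<Gamma> \<Longrightarrow> (x,C) \<in> set \<Gamma> \<Longrightarrow> \<exists>s. TY \<Gamma> C (Cst s)"
proof (induction \<Gamma>)
  case Nil then show ?case by simp
next
  case (Cons p \<Gamma>)
  obtain y D where p: "p = (y,D)" by force
  from Cons.prems(1)[unfolded p] obtain s where ok: "OK \<Gamma>" and D: "TY \<Gamma> D (Cst s)"
    by (auto elim: okE)
  show ?case
  proof (cases "(x,C) = (y,D)")
    case True
    thus ?thesis using weaken1[OF D] Cons.prems(1) p by auto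
  next
    case False
    hence "(x,C) \<in> set \<Gamma>" using Cons.prems(2) p by auto
    then obtain s' where "TY \<Gamma> C (Cst s')" using Cons.IH ok by blast
    thus ?thesis using weaken1 Cons.prems(1) p by blast
  qed
qed

definition ccv :: "('c,'v) ctx \<Rightarrow> ('c,'v) ctx \<Rightarrow> bool" where
  "ccv \<Gamma> \<Gamma>' \<longleftrightarrow> OK \<Gamma>' \<and> set (map fst \<Gamma>) \<subseteq> set (map fst \<Gamma>') \<and>
     (\<forall>x C. (x,C) \<in> set \<Gamma> \<longrightarrow> (\<exists>C' s. (x,C') \<in> set \<Gamma>' \<and> bc C' C \<and> TY \<Gamma>' C (Cst s)))"

lemma ccv_dom: "ccv \<Gamma> \<Gamma>' \<Longrightarrow> y \<notin> set (map fst \<Gamma>') \<Longrightarrow> y \<notin> set (map fst \<Gamma>)"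
  unfolding ccv_def by blast

lemma ccv_ext: "ccv \<Gamma> \<Gamma>' \<Longrightarrow> TY \<Gamma>' A (Cst s) \<Longrightarrow> y \<notin> set (map fst \<Gamma>') \<Longrightarrow> ccv ((y,A)#\<Gamma>) ((y,A)#\<Gamma>')"
proof -
  assume c: "ccv \<Gamma> \<Gamma>'" and A: "TY \<Gamma>' A (Cst s)" and y: "y \<notin> set (map fst \<Gamma>')"
  have ok: "OK ((y,A)#\<Gamma>')" using ctx_ok_has_typ.t_cons[OF _ A y] c unfolding ccv_def by blast
  show ?thesis unfolding ccv_def
  proof (intro conjI allI impI)
    show "OK ((y,A)#\<Gamma>')" by (rule ok)
    show "set (map fst ((y,A)#\<Gamma>)) \<subseteq> set (map fst ((y,A)#\<Gamma>'))" using c unfolding ccv_def by auto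
    fix x C assume "(x,C) \<in> set ((y,A)#\<Gamma>)"
    then consider "(x,C) = (y,A)" | "(x,C) \<in> set \<Gamma>" by auto
    thus "\<exists>C' s. (x,C') \<in> set ((y,A)#\<Gamma>') \<and> bc C' C \<and> TY ((y,A)#\<Gamma>') C (Cst s)"
    proof cases
      case 1 thus ?thesis using weaken1[OF A ok] bconv.c_refl[of enc dec chi A] by auto
    next
      case 2
      then obtain C' s' where "(x,C') \<in> set \<Gamma>'" "bc C' C" "TY \<Gamma>' C (Cst s')"
        using c unfolding ccv_def by blast
      thus ?thesis using weaken1[OF _ ok] by auto
    qed
  qed
qed

lemma ctxconv_aux: shows "OK \<Gamma> \<Longrightarrow> True" and "TY \<Gamma> M A \<Longrightarrow> (\<forall>\<Gamma>'. ccv \<Gamma> \<Gamma>' \<longrightarrow> TY \<Gamma>' M A)"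
proof (induction rule: ctx_ok_has_typ.inducts)
  case (t_sort \<Gamma> s1 s2)
  then show ?case by (auto simp: ccv_def intro: ctx_ok_has_typ.t_sort)
next
  case (t_var \<Gamma> x A)
  show ?case
  proof (intro allI impI)
    fix \<Gamma>' assume c: "ccv \<Gamma> \<Gamma>'"
    then obtain C' s where "(x,C') \<in> set \<Gamma>'" "bc C' A" "TY \<Gamma>' A (Cst s)"
      using t_var unfolding ccv_def by blast
    moreover have "OK \<Gamma>'" using c unfolding ccv_def by blast
    ultimately show "TY \<Gamma>' (Var x) A" by (blast intro: ctx_ok_has_typ.t_var ctx_ok_has_typ.t_conv)
  qed
next
  case (t_prod s1 s2 s3 \<Gamma> A B x)
  show ?case
  proof (intro allI impI)
    fix \<Gamma>' assume w: "ccv \<Gamma> \<Gamma>'"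
    have A': "TY \<Gamma>' A (Cst s1)" using t_prod w by blast
    show "TY \<Gamma>' (Pi x A B) (Cst s3)"
    proof (rule ctx_ok_has_typ.t_prod[OF t_prod(1) A'], intro allI impI)
      fix y assume y: "y \<notin> set (map fst \<Gamma>')"
      have "\<forall>\<Gamma>''. ccv ((y,A)#\<Gamma>) \<Gamma>'' \<longrightarrow> TY \<Gamma>'' (U B x (Var y)) (Cst s2)"
        using t_prod ccv_dom[OF w y] by blast
      thus "TY ((y,A)#\<Gamma>') (U B x (Var y)) (Cst s2)" using ccv_ext[OF w A' y] by blast
    qed
  qed
next
  case (t_abs s1 s2 s3 \<Gamma> A B y M x)
  show ?case
  proof (intro allI impI)
    fix \<Gamma>' assume w: "ccv \<Gamma> \<Gamma>'"
    have A': "TY \<Gamma>' A (Cst s1)" using t_abs w by blast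
    show "TY \<Gamma>' (Lam x A M) (Pi y A B)"
    proof (rule ctx_ok_has_typ.t_abs[OF t_abs(1) A'], safe)
      fix z assume z: "z \<notin> set (map fst \<Gamma>')"
      have "\<forall>\<Gamma>''. ccv ((z,A)#\<Gamma>) \<Gamma>'' \<longrightarrow> TY \<Gamma>'' (U B y (Var z)) (Cst s2)"
        using t_abs ccv_dom[OF w z] by blast
      thus "TY ((z,A)#\<Gamma>') (U B y (Var z)) (Cst s2)" using ccv_ext[OF w A' z] by blast
    next
      fix z assume z: "z \<notin> set (map fst \<Gamma>')"
      have "\<forall>\<Gamma>''. ccv ((z,A)#\<Gamma>) \<Gamma>'' \<longrightarrow> TY \<Gamma>'' (U M x (Var z)) (U B y (Var z))"
        using t_abs ccv_dom[OF w z] by blast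
      thus "TY ((z,A)#\<Gamma>') (U M x (Var z)) (U B y (Var z))" using ccv_ext[OF w A' z] by blast
    qed
  qed
next
  case (t_app \<Gamma> M x A B N s)
  then show ?case by (blast intro: ctx_ok_has_typ.t_app)
next
  case (t_conv \<Gamma> M A B s)
  then show ?case by (blast intro: ctx_ok_has_typ.t_conv)
qed auto

lemma ctxconv: "TY \<Gamma> M A \<Longrightarrow> ccv \<Gamma> \<Gamma>' \<Longrightarrow> TY \<Gamma>' M A"
  using ctxconv_aux(2) by blast


inductive_cases alE_cst: "alpha enc dec chi (Cst k) P"
inductive_cases alE_var: "alpha enc dec chi (Var x) P"
inductive_cases alE_app: "alpha enc dec chi (App M N) P"
inductive_cases alE_lam: "alpha enc dec chi (Lam x A M) P"
inductive_cases alE_pi: "alpha enc dec chi (Pi x A M) P"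

lemma alE_lam': "al (Lam x A M) P \<Longrightarrow> \<exists>x' A' M' v. P = Lam x' A' M' \<and> al A A' \<and>
   v \<notin> set (removeAll x (fv M)) \<and> v \<notin> set (removeAll x' (fv M')) \<and> U M x (Var v) = U M' x' (Var v)"
  by (erule alpha.cases) auto

lemma alE_pi': "al (Pi x A M) P \<Longrightarrow> \<exists>x' A' M' v. P = Pi x' A' M' \<and> al A A' \<and>
   v \<notin> set (removeAll x (fv M)) \<and> v \<notin> set (removeAll x' (fv M')) \<and> U M x (Var v) = U M' x' (Var v)"
  by (erule alpha.cases) auto

lemma alpha_body_eq:
  assumes e: "U B x (Var v) = U B' x' (Var v)" and h1: "v \<notin> set (removeAll x (fv B))"
    and h2: "v \<notin> set (removeAll x' (fv B'))"
  shows "U B x N = U B' x' N"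
proof -
  have 1: "S (U B x (Var v)) (Var(v := N)) = U B x N"
    using subst_fresh[OF h1, of Var N] by (simp add: usubst_def)
  have 2: "S (U B' x' (Var v)) (Var(v := N)) = U B' x' N"
    using subst_fresh[OF h2, of Var N] by (simp add: usubst_def)
  show ?thesis using 1 2 e by simp
qed

lemma ccv_swap:
  assumes A: "TY \<Gamma> A (Cst s)" and A': "TY \<Gamma> A' (Cst s')" and b: "bc A' A" and y: "y \<notin> set (map fst \<Gamma>)"
  shows "ccv ((y,A)#\<Gamma>) ((y,A')#\<Gamma>)"
proof -
  have ok0: "OK \<Gamma>" by (rule typ_ok[OF A])
  have ok: "OK ((y,A')#\<Gamma>)" by (rule ctx_ok_has_typ.t_cons[OF ok0 A' y])
  show ?thesis unfolding ccv_def
  proof (intro conjI allI impI)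
    show "OK ((y,A')#\<Gamma>)" by (rule ok)
    show "set (map fst ((y,A)#\<Gamma>)) \<subseteq> set (map fst ((y,A')#\<Gamma>))" by auto
    fix x C assume "(x,C) \<in> set ((y,A)#\<Gamma>)"
    then consider "(x,C) = (y,A)" | "(x,C) \<in> set \<Gamma>" by auto
    thus "\<exists>C' s. (x,C') \<in> set ((y,A')#\<Gamma>) \<and> bc C' C \<and> TY ((y,A')#\<Gamma>) C (Cst s)"
    proof cases
      case 1 thus ?thesis using weaken1[OF A ok] b by auto
    next
      case 2
      then obtain s'' where "TY \<Gamma> C (Cst s'')" using ctx_types[OF ok0] by blast
      thus ?thesis using weaken1[OF _ ok] 2 bconv.c_refl[of enc dec chi C] by auto
    qed
  qed
qed

lemma salpha_aux: shows "OK \<Gamma> \<Longrightarrow> True" and "TY \<Gamma> P C \<Longrightarrow> (\<forall>P'. al P P' \<longrightarrow> TY \<Gamma> P' C)"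
proof (induction rule: ctx_ok_has_typ.inducts)
  case (t_sort \<Gamma> s1 s2)
  then show ?case by (auto elim: alE_cst intro: ctx_ok_has_typ.t_sort)
next
  case (t_var \<Gamma> x A)
  then show ?case by (auto elim: alE_var intro: ctx_ok_has_typ.t_var)
next
  case (t_prod s1 s2 s3 \<Gamma> A B x)
  show ?case
  proof (intro allI impI)
    fix P' assume "al (Pi x A B) P'"
    then obtain x' A' B' v where P': "P' = Pi x' A' B'" and aA: "al A A'"
      and v1: "v \<notin> set (removeAll x (fv B))" and v2: "v \<notin> set (removeAll x' (fv B'))"
      and e: "U B x (Var v) = U B' x' (Var v)" using alE_pi' by blast
    have A0: "TY \<Gamma> A (Cst s1)" using t_prod by blast
    have A': "TY \<Gamma> A' (Cst s1)" using t_prod aA by blast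
    have b: "bc A' A" by (rule bconv.c_alpha[OF alpha_sym[OF aA]])
    show "TY \<Gamma> P' (Cst s3)" unfolding P'
    proof (rule ctx_ok_has_typ.t_prod[OF t_prod(1) A'], intro allI impI)
      fix y assume y: "y \<notin> set (map fst \<Gamma>)"
      have "TY ((y,A)#\<Gamma>) (U B x (Var y)) (Cst s2)" using t_prod y by blast
      hence "TY ((y,A)#\<Gamma>) (U B' x' (Var y)) (Cst s2)" using alpha_body_eq[OF e v1 v2] by simp
      thus "TY ((y,A')#\<Gamma>) (U B' x' (Var y)) (Cst s2)" using ctxconv ccv_swap[OF A0 A' b y] by blast
    qed
  qed
next
  case (t_abs s1 s2 s3 \<Gamma> A B y M x)
  show ?case
  proof (intro allI impI)
    fix P' assume "al (Lam x A M) P'"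
    then obtain x' A' M' v where P': "P' = Lam x' A' M'" and aA: "al A A'"
      and v1: "v \<notin> set (removeAll x (fv M))" and v2: "v \<notin> set (removeAll x' (fv M'))"
      and e: "U M x (Var v) = U M' x' (Var v)" using alE_lam' by blast
    have A0: "TY \<Gamma> A (Cst s1)" using t_abs by blast
    have A': "TY \<Gamma> A' (Cst s1)" using t_abs aA by blast
    have b: "bc A' A" by (rule bconv.c_alpha[OF alpha_sym[OF aA]])
    have 1: "TY \<Gamma> (Lam x' A' M') (Pi y A' B)"
    proof (rule ctx_ok_has_typ.t_abs[OF t_abs(1) A'], safe)
      fix z assume z: "z \<notin> set (map fst \<Gamma>)"
      have "TY ((z,A)#\<Gamma>) (U B y (Var z)) (Cst s2)" using t_abs z by blast
      thus "TY ((z,A')#\<Gamma>) (U B y (Var z)) (Cst s2)" using ctxconv ccv_swap[OF A0 A' b z] by blast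
    next
      fix z assume z: "z \<notin> set (map fst \<Gamma>)"
      have "TY ((z,A)#\<Gamma>) (U M x (Var z)) (U B y (Var z))" using t_abs z by blast
      hence "TY ((z,A)#\<Gamma>) (U M' x' (Var z)) (U B y (Var z))" using alpha_body_eq[OF e v1 v2] by simp
      thus "TY ((z,A')#\<Gamma>) (U M' x' (Var z)) (U B y (Var z))" using ctxconv ccv_swap[OF A0 A' b z] by blast
    qed
    have 2: "TY \<Gamma> (Pi y A B) (Cst s3)"
      by (rule ctx_ok_has_typ.t_prod[OF t_abs(1) A0]) (use t_abs in blast)
    show "TY \<Gamma> P' (Pi y A B)" unfolding P'
      by (rule ctx_ok_has_typ.t_conv[OF 1 bconv_pi_dom[OF b] 2])
  qed
next
  case (t_app \<Gamma> M x A B N s)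
  show ?case
  proof (intro allI impI)
    fix P' assume "al (App M N) P'"
    then obtain M' N' where P': "P' = App M' N'" and aM: "al M M'" and aN: "al N N'"
      by (auto elim: alE_app)
    have M': "TY \<Gamma> M' (Pi x A B)" using t_app aM by blast
    have N': "TY \<Gamma> N' A" using t_app aN by blast
    have aU: "al (U B x N) (U B x N')"
      unfolding usubst_def by (rule alpha_subst_cong) (auto simp: alpha_refl aN)
    have T': "TY \<Gamma> (U B x N') (Cst s)" using t_app aU by blast
    have T: "TY \<Gamma> (U B x N) (Cst s)" using t_app by blast
    show "TY \<Gamma> P' (U B x N)" unfolding P'
      by (rule ctx_ok_has_typ.t_conv[OF ctx_ok_has_typ.t_app[OF M' N' T']
            bconv.c_alpha[OF alpha_sym[OF aU]] T])
  qed
next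
  case (t_conv \<Gamma> M A B s)
  then show ?case by (blast intro: ctx_ok_has_typ.t_conv)
qed auto

lemma salpha: "TY \<Gamma> P C \<Longrightarrow> al P P' \<Longrightarrow> TY \<Gamma> P' C"
  using salpha_aux(2) by blast

definition ctxi :: "('c,'v) ctx \<Rightarrow> ('c,'v) ctx" where
  "ctxi \<Gamma> = map (\<lambda>(x,C). (x, S C Var)) \<Gamma>"

lemma ctxi_dom: "map fst (ctxi \<Gamma>) = map fst \<Gamma>"
  unfolding ctxi_def by (induction \<Gamma>) auto

lemma ctxi_cons: "ctxi ((x,C)#\<Gamma>) = (x, S C Var) # ctxi \<Gamma>"
  unfolding ctxi_def by simp

lemma ctxi_mem: "(x,C) \<in> set \<Gamma> \<Longrightarrow> (x, S C Var) \<in> set (ctxi \<Gamma>)"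
  unfolding ctxi_def by force

lemma iota_aux: shows "OK \<Gamma> \<Longrightarrow> OK (ctxi \<Gamma>)" and "TY \<Gamma> M A \<Longrightarrow> TY (ctxi \<Gamma>) (S M Var) (S A Var)"
proof (induction rule: ctx_ok_has_typ.inducts)
  case t_nil
  then show ?case by (simp add: ctxi_def ctx_ok_has_typ.t_nil)
next
  case (t_cons \<Gamma> A s x)
  have 1: "TY (ctxi \<Gamma>) (S A Var) (Cst s)" using t_cons by simp
  have 2: "OK (ctxi \<Gamma>)" using t_cons by simp
  have 3: "x \<notin> set (map fst (ctxi \<Gamma>))" using t_cons by (simp add: ctxi_dom)
  show ?case unfolding ctxi_cons by (rule ctx_ok_has_typ.t_cons[OF 2 1 3])
next
  case (t_sort \<Gamma> s1 s2)
  then show ?case by (auto intro: ctx_ok_has_typ.t_sort)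
next
  case (t_var \<Gamma> x A)
  then show ?case by (auto intro: ctx_ok_has_typ.t_var ctxi_mem)
next
  case (t_prod s1 s2 s3 \<Gamma> A B x)
  define u where "u = XS Var (removeAll x (fv B))"
  have A': "TY (ctxi \<Gamma>) (S A Var) (Cst s1)" using t_prod by simp
  show ?case unfolding S_pi u_def[symmetric] sbst.simps(1)
  proof (rule ctx_ok_has_typ.t_prod[OF t_prod(1) A'], intro allI impI)
    fix z assume z: "z \<notin> set (map fst (ctxi \<Gamma>))"
    hence "z \<notin> set (map fst \<Gamma>)" by (simp add: ctxi_dom)
    hence "TY (ctxi ((z,A)#\<Gamma>)) (S (U B x (Var z)) Var) (S (Cst s2) Var)" using t_prod by blast
    thus "TY ((z, S A Var) # ctxi \<Gamma>) (U (S B (Var(x := Var u))) u (Var z)) (Cst s2)"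
      unfolding rename_iota[OF XS_fresh_body[of B x Var, folded u_def]] ctxi_cons
      by (simp add: usubst_def)
  qed
next
  case (t_abs s1 s2 s3 \<Gamma> A B y M x)
  define u where "u = XS Var (removeAll x (fv M))"
  define u' where "u' = XS Var (removeAll y (fv B))"
  have A': "TY (ctxi \<Gamma>) (S A Var) (Cst s1)" using t_abs by simp
  show ?case unfolding S_pi S_lam u_def[symmetric] u'_def[symmetric]
  proof (rule ctx_ok_has_typ.t_abs[OF t_abs(1) A'], safe)
    fix z assume z: "z \<notin> set (map fst (ctxi \<Gamma>))"
    hence "z \<notin> set (map fst \<Gamma>)" by (simp add: ctxi_dom)
    hence "TY (ctxi ((z,A)#\<Gamma>)) (S (U B y (Var z)) Var) (S (Cst s2) Var)" using t_abs by blast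
    thus "TY ((z, S A Var) # ctxi \<Gamma>) (U (S B (Var(y := Var u'))) u' (Var z)) (Cst s2)"
      unfolding rename_iota[OF XS_fresh_body[of B y Var, folded u'_def]] ctxi_cons
      by (simp add: usubst_def)
  next
    fix z assume z: "z \<notin> set (map fst (ctxi \<Gamma>))"
    hence "z \<notin> set (map fst \<Gamma>)" by (simp add: ctxi_dom)
    hence "TY (ctxi ((z,A)#\<Gamma>)) (S (U M x (Var z)) Var) (S (U B y (Var z)) Var)" using t_abs by blast
    thus "TY ((z, S A Var) # ctxi \<Gamma>) (U (S M (Var(x := Var u))) u (Var z)) (U (S B (Var(y := Var u'))) u' (Var z))"
      unfolding rename_iota[OF XS_fresh_body[of B y Var, folded u'_def]]
        rename_iota[OF XS_fresh_body[of M x Var, folded u_def]] ctxi_cons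
      by (simp add: usubst_def)
  qed
next
  case (t_app \<Gamma> M x A B N s)
  define u where "u = XS Var (removeAll x (fv B))"
  have eq: "U (S B (Var(x := Var u))) u (S N Var) = S (U B x N) Var"
    unfolding usubst_after[OF XS_fresh_body[of B x Var, folded u_def]] S_usubst comp_Var_Var ..
  have M': "TY (ctxi \<Gamma>) (S M Var) (Pi u (S A Var) (S B (Var(x := Var u))))"
    using t_app unfolding S_pi u_def by blast
  have N': "TY (ctxi \<Gamma>) (S N Var) (S A Var)" using t_app by blast
  have T': "TY (ctxi \<Gamma>) (U (S B (Var(x := Var u))) u (S N Var)) (Cst s)" unfolding eq using t_app by simp
  show ?case using ctx_ok_has_typ.t_app[OF M' N' T'] unfolding eq by simp
next
  case (t_conv \<Gamma> M A B s)
  then show ?case using bconv_subst by (auto intro: ctx_ok_has_typ.t_conv)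
qed

lemma iota_back: "OK \<Gamma> \<Longrightarrow> TY (ctxi \<Gamma>) N D \<Longrightarrow> TY \<Gamma> N D"
proof (induction \<Gamma> arbitrary: N D)
  case Nil
  then show ?case by (simp add: ctxi_def)
next
  case (Cons p \<Gamma>0)
  obtain y C where p: "p = (y,C)" by force
  from Cons.prems(1)[unfolded p] obtain s where ok0: "OK \<Gamma>0" and C: "TY \<Gamma>0 C (Cst s)"
    and y: "y \<notin> set (map fst \<Gamma>0)" by (auto elim: okE)
  have ok: "OK ((y,C)#\<Gamma>0)" using Cons.prems(1) p by simp
  have lift: "TY ((y,C)#\<Gamma>0) (S E Var) (Cst s')" if "TY \<Gamma>0 E (Cst s')" for E s'
  proof -
    have "TY (ctxi \<Gamma>0) (S E Var) (Cst s')" using iota_aux(2)[OF that] by simp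
    hence "TY \<Gamma>0 (S E Var) (Cst s')" using Cons.IH[OF ok0] by blast
    thus ?thesis using weaken1[OF _ ok] by blast
  qed
  have "ccv (ctxi ((y,C)#\<Gamma>0)) ((y,C)#\<Gamma>0)" unfolding ccv_def
  proof (intro conjI allI impI)
    show "OK ((y,C)#\<Gamma>0)" by (rule ok)
    show "set (map fst (ctxi ((y,C)#\<Gamma>0))) \<subseteq> set (map fst ((y,C)#\<Gamma>0))" by (simp add: ctxi_dom)
    fix x E assume "(x,E) \<in> set (ctxi ((y,C)#\<Gamma>0))"
    then consider "(x,E) = (y, S C Var)" | E0 where "(x,E0) \<in> set \<Gamma>0" "E = S E0 Var"
      unfolding ctxi_def by auto
    thus "\<exists>C' s. (x,C') \<in> set ((y,C)#\<Gamma>0) \<and> bc C' E \<and> TY ((y,C)#\<Gamma>0) E (Cst s)"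
    proof cases
      case 1 thus ?thesis using lift[OF C] bconv.c_alpha[OF alpha_iota[of C]] by auto
    next
      case 2
      then obtain s'' where "TY \<Gamma>0 E0 (Cst s'')" using ctx_types[OF ok0] by blast
      thus ?thesis using lift 2 bconv.c_alpha[OF alpha_iota[of E0]] by auto
    qed
  qed
  thus ?case using ctxconv Cons.prems(2) p by blast
qed

lemma iota_typ: "TY \<Gamma> N D \<Longrightarrow> TY \<Gamma> (S N Var) (S D Var)"
  using iota_back[OF typ_ok] iota_aux(2) by blast

abbreviation WT :: "('v \<Rightarrow> ('c,'v) trm) \<Rightarrow> ('c,'v) ctx \<Rightarrow> ('c,'v) ctx \<Rightarrow> bool" where
  "WT \<equiv> wt_subst enc dec chi ax rl"

lemma wt_ext:
  assumes wt: "WT \<sigma> \<Gamma> \<Delta>" and ok: "OK ((z, S A \<sigma>)#\<Delta>)" and w1: "w \<notin> set (map fst \<Gamma>)"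
    and w2: "w \<notin> set (fv A)" and w3: "w \<notin> set (concat (map (fv \<circ> snd) \<Gamma>))"
  shows "WT (\<sigma>(w := Var z)) ((w,A)#\<Gamma>) ((z, S A \<sigma>)#\<Delta>)"
  unfolding wt_subst_def
proof (intro allI impI)
  fix v C assume "(v,C) \<in> set ((w,A)#\<Gamma>)"
  then consider "(v,C) = (w,A)" | "(v,C) \<in> set \<Gamma>" by auto
  thus "TY ((z, S A \<sigma>)#\<Delta>) ((\<sigma>(w := Var z)) v) (S C (\<sigma>(w := Var z)))"
  proof cases
    case 1
    have "S A (\<sigma>(w := Var z)) = S A \<sigma>" using w2 by (intro sbst_cong) auto
    thus ?thesis using 1 ctx_ok_has_typ.t_var[OF ok] by auto
  next
    case 2
    have vw: "v \<noteq> w" using 2 w1 by force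
    have "w \<notin> set (fv C)" using 2 w3 by force
    hence "S C (\<sigma>(w := Var z)) = S C \<sigma>" by (intro sbst_cong) auto
    moreover have "TY \<Delta> (\<sigma> v) (S C \<sigma>)" using wt 2 unfolding wt_subst_def by blast
    ultimately show ?thesis using vw weaken1[OF _ ok] by auto
  qed
qed

lemma main_aux: shows "OK \<Gamma> \<Longrightarrow> True"
  and "TY \<Gamma> M A \<Longrightarrow> (\<forall>\<sigma> \<Delta>. WT \<sigma> \<Gamma> \<Delta> \<longrightarrow> OK \<Delta> \<longrightarrow> TY \<Delta> (S M \<sigma>) (S A \<sigma>))"
proof (induction rule: ctx_ok_has_typ.inducts)
  case (t_sort \<Gamma> s1 s2)
  then show ?case by (auto intro: ctx_ok_has_typ.t_sort)
next
  case (t_var \<Gamma> x A)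
  then show ?case by (auto simp: wt_subst_def)
next
  case (t_prod s1 s2 s3 \<Gamma> A B x)
  show ?case
  proof (intro allI impI)
    fix \<sigma> \<Delta> assume wt: "WT \<sigma> \<Gamma> \<Delta>" and ok: "OK \<Delta>"
    define u where "u = XS \<sigma> (removeAll x (fv B))"
    have A': "TY \<Delta> (S A \<sigma>) (Cst s1)" using t_prod wt ok by fastforce
    show "TY \<Delta> (S (Pi x A B) \<sigma>) (S (Cst s3) \<sigma>)" unfolding S_pi u_def[symmetric] sbst.simps(1)
    proof (rule ctx_ok_has_typ.t_prod[OF t_prod(1) A'], intro allI impI)
      fix z assume z: "z \<notin> set (map fst \<Delta>)"
      obtain w where w: "w \<notin> set (map fst \<Gamma> @ fv B @ fv A @ concat (map (fv \<circ> snd) \<Gamma>))"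
        using fresh_exists by blast
      have ok': "OK ((z, S A \<sigma>)#\<Delta>)" by (rule ctx_ok_has_typ.t_cons[OF ok A' z])
      have wt': "WT (\<sigma>(w := Var z)) ((w,A)#\<Gamma>) ((z, S A \<sigma>)#\<Delta>)"
        by (rule wt_ext[OF wt ok']) (use w in auto)
      have y0: "w \<notin> set (map fst \<Gamma>)" using w by auto
      have h: "\<forall>\<sigma>' \<Delta>'. WT \<sigma>' ((w,A)#\<Gamma>) \<Delta>' \<longrightarrow> OK \<Delta>' \<longrightarrow> TY \<Delta>' (S (U B x (Var w)) \<sigma>') (S (Cst s2) \<sigma>')"
        using t_prod y0 by blast
      have "TY ((z, S A \<sigma>)#\<Delta>) (S (U B x (Var w)) (\<sigma>(w := Var z))) (S (Cst s2) (\<sigma>(w := Var z)))"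
        using h wt' ok' by blast
      hence "TY ((z, S A \<sigma>)#\<Delta>) (S B (\<sigma>(x := Var z))) (Cst s2)"
        using subst_fresh[of w x B] w by auto
      from iota_typ[OF this]
      show "TY ((z, S A \<sigma>)#\<Delta>) (U (S B (\<sigma>(x := Var u))) u (Var z)) (Cst s2)"
        unfolding rename_iota[OF XS_fresh_body[of B x \<sigma>, folded u_def]] by simp
    qed
  qed
next
  case (t_abs s1 s2 s3 \<Gamma> A B y M x)
  show ?case
  proof (intro allI impI)
    fix \<sigma> \<Delta> assume wt: "WT \<sigma> \<Gamma> \<Delta>" and ok: "OK \<Delta>"
    define u where "u = XS \<sigma> (removeAll x (fv M))"
    define u' where "u' = XS \<sigma> (removeAll y (fv B))"
    have A': "TY \<Delta> (S A \<sigma>) (Cst s1)" using t_abs wt ok by fastforce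
    show "TY \<Delta> (S (Lam x A M) \<sigma>) (S (Pi y A B) \<sigma>)"
      unfolding S_pi S_lam u_def[symmetric] u'_def[symmetric]
    proof (rule ctx_ok_has_typ.t_abs[OF t_abs(1) A'], safe)
      fix z assume z: "z \<notin> set (map fst \<Delta>)"
      obtain w where w: "w \<notin> set (map fst \<Gamma> @ fv B @ fv A @ concat (map (fv \<circ> snd) \<Gamma>))"
        using fresh_exists by blast
      have ok': "OK ((z, S A \<sigma>)#\<Delta>)" by (rule ctx_ok_has_typ.t_cons[OF ok A' z])
      have wt': "WT (\<sigma>(w := Var z)) ((w,A)#\<Gamma>) ((z, S A \<sigma>)#\<Delta>)"
        by (rule wt_ext[OF wt ok']) (use w in auto)
      have y0: "w \<notin> set (map fst \<Gamma>)" using w by auto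
      have h: "\<forall>\<sigma>' \<Delta>'. WT \<sigma>' ((w,A)#\<Gamma>) \<Delta>' \<longrightarrow> OK \<Delta>' \<longrightarrow> TY \<Delta>' (S (U B y (Var w)) \<sigma>') (S (Cst s2) \<sigma>')"
        using t_abs y0 by blast
      have "TY ((z, S A \<sigma>)#\<Delta>) (S (U B y (Var w)) (\<sigma>(w := Var z))) (S (Cst s2) (\<sigma>(w := Var z)))"
        using h wt' ok' by blast
      hence "TY ((z, S A \<sigma>)#\<Delta>) (S B (\<sigma>(y := Var z))) (Cst s2)"
        using subst_fresh[of w y B] w by auto
      from iota_typ[OF this]
      show "TY ((z, S A \<sigma>)#\<Delta>) (U (S B (\<sigma>(y := Var u'))) u' (Var z)) (Cst s2)"
        unfolding rename_iota[OF XS_fresh_body[of B y \<sigma>, folded u'_def]] by simp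
    next
      fix z assume z: "z \<notin> set (map fst \<Delta>)"
      obtain w where w: "w \<notin> set (map fst \<Gamma> @ fv B @ fv M @ fv A @ concat (map (fv \<circ> snd) \<Gamma>))"
        using fresh_exists by blast
      have ok': "OK ((z, S A \<sigma>)#\<Delta>)" by (rule ctx_ok_has_typ.t_cons[OF ok A' z])
      have wt': "WT (\<sigma>(w := Var z)) ((w,A)#\<Gamma>) ((z, S A \<sigma>)#\<Delta>)"
        by (rule wt_ext[OF wt ok']) (use w in auto)
      have y0: "w \<notin> set (map fst \<Gamma>)" using w by auto
      have h: "\<forall>\<sigma>' \<Delta>'. WT \<sigma>' ((w,A)#\<Gamma>) \<Delta>' \<longrightarrow> OK \<Delta>' \<longrightarrow> TY \<Delta>' (S (U M x (Var w)) \<sigma>') (S (U B y (Var w)) \<sigma>')"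
        using t_abs y0 by blast
      have "TY ((z, S A \<sigma>)#\<Delta>) (S (U M x (Var w)) (\<sigma>(w := Var z))) (S (U B y (Var w)) (\<sigma>(w := Var z)))"
        using h wt' ok' by blast
      hence "TY ((z, S A \<sigma>)#\<Delta>) (S M (\<sigma>(x := Var z))) (S B (\<sigma>(y := Var z)))"
        using subst_fresh[of w y B] subst_fresh[of w x M] w by auto
      from iota_typ[OF this]
      show "TY ((z, S A \<sigma>)#\<Delta>) (U (S M (\<sigma>(x := Var u))) u (Var z)) (U (S B (\<sigma>(y := Var u'))) u' (Var z))"
        unfolding rename_iota[OF XS_fresh_body[of B y \<sigma>, folded u'_def]]
          rename_iota[OF XS_fresh_body[of M x \<sigma>, folded u_def]] .
    qed
  qed
next
  case (t_app \<Gamma> M x A B N s)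
  show ?case
  proof (intro allI impI)
    fix \<sigma> \<Delta> assume wt: "WT \<sigma> \<Gamma> \<Delta>" and ok: "OK \<Delta>"
    define u where "u = XS \<sigma> (removeAll x (fv B))"
    have eq1: "U (S B (\<sigma>(x := Var u))) u (S N \<sigma>) = S B ((comp \<sigma> Var)(x := S N \<sigma>))"
      by (rule usubst_after[OF XS_fresh_body[of B x \<sigma>, folded u_def]])
    have eq2: "S (U B x N) \<sigma> = S B (\<sigma>(x := S N \<sigma>))" by (rule S_usubst)
    have a: "al (S B ((comp \<sigma> Var)(x := S N \<sigma>))) (S B (\<sigma>(x := S N \<sigma>)))"
      by (rule alpha_subst_cong[OF alpha_iota_upd])
    have M': "TY \<Delta> (S M \<sigma>) (Pi u (S A \<sigma>) (S B (\<sigma>(x := Var u))))"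
      using t_app wt ok unfolding S_pi u_def by blast
    have N': "TY \<Delta> (S N \<sigma>) (S A \<sigma>)" using t_app wt ok by blast
    have T2: "TY \<Delta> (S B (\<sigma>(x := S N \<sigma>))) (Cst s)" using t_app wt ok eq2 by fastforce
    have T1: "TY \<Delta> (U (S B (\<sigma>(x := Var u))) u (S N \<sigma>)) (Cst s)"
      unfolding eq1 by (rule salpha[OF T2 alpha_sym[OF a]])
    have "TY \<Delta> (App (S M \<sigma>) (S N \<sigma>)) (S B (\<sigma>(x := S N \<sigma>)))"
      using ctx_ok_has_typ.t_conv[OF ctx_ok_has_typ.t_app[OF M' N' T1] _ T2] bconv.c_alpha[OF a]
      unfolding eq1 by blast
    thus "TY \<Delta> (S (App M N) \<sigma>) (S (U B x N) \<sigma>)" unfolding eq2 by simp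
  qed
next
  case (t_conv \<Gamma> M A B s)
  show ?case
  proof (intro allI impI)
    fix \<sigma> \<Delta> assume wt: "WT \<sigma> \<Gamma> \<Delta>" and ok: "OK \<Delta>"
    have 1: "TY \<Delta> (S M \<sigma>) (S A \<sigma>)" using t_conv wt ok by blast
    have 2: "TY \<Delta> (S B \<sigma>) (Cst s)" using t_conv wt ok by fastforce
    show "TY \<Delta> (S M \<sigma>) (S B \<sigma>)"
      using ctx_ok_has_typ.t_conv[OF 1 bconv_subst 2] t_conv by blast
  qed
qed auto

end

theorem mainTheorem16:
  fixes enc :: "'v \<Rightarrow> nat" and dec :: "nat \<Rightarrow> 'v" and chi :: "nat list \<Rightarrow> nat"
    and ax :: "'c \<Rightarrow> 'c \<Rightarrow> bool" and rl :: "'c \<Rightarrow> 'c \<Rightarrow> 'c \<Rightarrow> bool"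
    and \<Gamma> \<Delta> :: "('c, 'v) ctx" and M A :: "('c, 'v) trm" and \<sigma> :: "'v \<Rightarrow> ('c, 'v) trm"
  assumes enc_dec: "\<And>n. enc (dec n) = n"
    and chi_fresh: "\<And>ns. chi ns \<notin> set ns"
    and "wt_subst enc dec chi ax rl \<sigma> \<Gamma> \<Delta>"
    and "ctx_ok enc dec chi ax rl \<Delta>"
    and "has_typ enc dec chi ax rl \<Gamma> M A"
  shows "has_typ enc dec chi ax rl \<Delta> (sbst enc dec chi M \<sigma>) (sbst enc dec chi A \<sigma>)"
proof -
  interpret pts enc dec chi ax rl using enc_dec chi_fresh by unfold_locales
  show ?thesis using main_aux(2)[OF assms(5)] assms(3,4) by blast
qed

end
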